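(* Let $n\ge1$ and let $P=\{(i,j)\colon 1\le i\le j\le n\}$ be the shifted staircase. Then $\sum_{p\in P}\mathbb{1}_p\equiv \frac{n(n+1)}{4}$.
   Context: $P$ is ordered by $(i,j)\le(i',j')$ iff $i\le i'$ and $j\le j'$. $\mathcal{J}(P)$ is the set of order ideals of $P$. For $x\in P$, $I\in\mathcal{J}(P)$: $\mathbb{1}_x(I)=1$ if $x\in I$, else $0$; $T_x^+(I)=1$ if $x$ is a minimal element of $P\setminus I$, else $0$; $T_x^-(I)=1$ if $x$ is a maximal element of $I$, else $0$; $T_x=T_x^+-T_x^-$. For $f,g\colon\mathcal{J}(P)\to\mathbb{R}$, $f\equiv g$ means $f-g=\sum_{x\in P}c_xT_x$ for some real constants $c_x$; a real number denotes the corresponding constant function. *)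

theory Defs
  imports Complex_Main "HOL-Library.Product_Order"
begin

text \<open>Posets are finite subsets of nat \<times> nat with the componentwise order
  (i,j) \<le> (i',j') iff i \<le> i' and j \<le> j' (the product order from Product_Order).\<close>

definition shifted_staircase :: "nat \<Rightarrow> (nat \<times> nat) set" where
  "shifted_staircase n = {(i, j). 1 \<le> i \<and> i \<le> j \<and> j \<le> n}"

definition order_ideals :: "(nat \<times> nat) set \<Rightarrow> (nat \<times> nat) set set" where
  "order_ideals P = {I. I \<subseteq> P \<and> (\<forall>x\<in>I. \<forall>y\<in>P. y \<le> x \<longrightarrow> y \<in> I)}"

definition ind :: "nat \<times> nat \<Rightarrow> (nat \<times> nat) set \<Rightarrow> real" where
  "ind x I = (if x \<in> I then 1 else 0)"

definition Tplus :: "(nat \<times> nat) set \<Rightarrow> nat \<times> nat \<Rightarrow> (nat \<times> nat) set \<Rightarrow> real" where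
  "Tplus P x I = (if x \<in> P - I \<and> (\<forall>y\<in>P - I. \<not> y < x) then 1 else 0)"

definition Tminus :: "(nat \<times> nat) set \<Rightarrow> nat \<times> nat \<Rightarrow> (nat \<times> nat) set \<Rightarrow> real" where
  "Tminus P x I = (if x \<in> I \<and> (\<forall>y\<in>I. \<not> x < y) then 1 else 0)"

definition toggle :: "(nat \<times> nat) set \<Rightarrow> nat \<times> nat \<Rightarrow> (nat \<times> nat) set \<Rightarrow> real" where
  "toggle P x I = Tplus P x I - Tminus P x I"

definition toggle_equiv :: "(nat \<times> nat) set \<Rightarrow> ((nat \<times> nat) set \<Rightarrow> real) \<Rightarrow> ((nat \<times> nat) set \<Rightarrow> real) \<Rightarrow> bool" where
  "toggle_equiv P f g \<longleftrightarrow> (\<exists>c :: nat \<times> nat \<Rightarrow> real. \<forall>I\<in>order_ideals P.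
      f I - g I = (\<Sum>x\<in>P. c x * toggle P x I))"

end

theory Submission
  imports Defs
begin

lemma pair_less_nat: "((a::nat), (b::nat)) < (c, d) \<longleftrightarrow> a \<le> c \<and> b \<le> d \<and> (a < c \<or> b < d)"
  by (auto simp: less_prod_def)

lemma mem_ss: "(a, b) \<in> shifted_staircase n \<longleftrightarrow> 1 \<le> a \<and> a \<le> b \<and> b \<le> n"
  by (simp add: shifted_staircase_def)

lemma ideal_closed:
  assumes "I \<in> order_ideals P" "x \<in> I" "y \<in> P" "y \<le> x"
  shows "y \<in> I"
  using assms by (auto simp: order_ideals_def)

lemma ideal_sub:
  assumes "I \<in> order_ideals P" "x \<in> I" shows "x \<in> P"
  using assms by (auto simp: order_ideals_def)

lemma tplus_char:
  assumes I: "I \<in> order_ideals (shifted_staircase n)" and y: "(a, b) \<in> shifted_staircase n"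
  shows "Tplus (shifted_staircase n) (a, b) I =
    (if (a, b) \<notin> I \<and> (2 \<le> a \<longrightarrow> (a - 1, b) \<in> I) \<and> (a < b \<longrightarrow> (a, b - 1) \<in> I) then 1 else 0)"
proof -
  let ?P = "shifted_staircase n"
  have "((a, b) \<in> ?P - I \<and> (\<forall>z\<in>?P - I. \<not> z < (a, b))) \<longleftrightarrow>
    ((a, b) \<notin> I \<and> (2 \<le> a \<longrightarrow> (a - 1, b) \<in> I) \<and> (a < b \<longrightarrow> (a, b - 1) \<in> I))"
  proof
    assume h: "(a, b) \<in> ?P - I \<and> (\<forall>z\<in>?P - I. \<not> z < (a, b))"
    show "(a, b) \<notin> I \<and> (2 \<le> a \<longrightarrow> (a - 1, b) \<in> I) \<and> (a < b \<longrightarrow> (a, b - 1) \<in> I)"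
    proof (intro conjI impI)
      show "(a, b) \<notin> I" using h by auto
    next
      assume "2 \<le> a"
      then have "(a - 1, b) \<in> ?P" "(a - 1, b) < (a, b)" using y by (auto simp: mem_ss pair_less_nat)
      then show "(a - 1, b) \<in> I" using h by blast
    next
      assume "a < b"
      then have "(a, b - 1) \<in> ?P" "(a, b - 1) < (a, b)" using y by (auto simp: mem_ss pair_less_nat)
      then show "(a, b - 1) \<in> I" using h by blast
    qed
  next
    assume h: "(a, b) \<notin> I \<and> (2 \<le> a \<longrightarrow> (a - 1, b) \<in> I) \<and> (a < b \<longrightarrow> (a, b - 1) \<in> I)"
    have "\<not> z < (a, b)" if z: "z \<in> ?P - I" for z
    proof
      assume lt: "z < (a, b)"
      obtain p q where zpq: "z = (p, q)" by (cases z)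
      show False
      proof (cases "p < a")
        case True
        then have "(a - 1, b) \<in> I" "z \<le> (a - 1, b)" using h z zpq lt y
          by (auto simp: mem_ss pair_less_nat)
        then show False using ideal_closed[OF I] z by blast
      next
        case False
        then have "(a, b - 1) \<in> I" "z \<le> (a, b - 1)" using h z zpq lt y
          by (auto simp: mem_ss pair_less_nat)
        then show False using ideal_closed[OF I] z by blast
      qed
    qed
    then show "(a, b) \<in> ?P - I \<and> (\<forall>z\<in>?P - I. \<not> z < (a, b))" using h y by blast
  qed
  then show ?thesis unfolding Tplus_def by simp
qed

lemma tminus_char:
  assumes I: "I \<in> order_ideals (shifted_staircase n)" and y: "(a, b) \<in> shifted_staircase n"
  shows "Tminus (shifted_staircase n) (a, b) I =
    (if (a, b) \<in> I \<and> (b < n \<longrightarrow> (a, b + 1) \<notin> I) \<and> (a < b \<longrightarrow> (a + 1, b) \<notin> I) then 1 else 0)"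
proof -
  let ?P = "shifted_staircase n"
  have "((a, b) \<in> I \<and> (\<forall>z\<in>I. \<not> (a, b) < z)) \<longleftrightarrow>
    ((a, b) \<in> I \<and> (b < n \<longrightarrow> (a, b + 1) \<notin> I) \<and> (a < b \<longrightarrow> (a + 1, b) \<notin> I))"
  proof
    assume h: "(a, b) \<in> I \<and> (\<forall>z\<in>I. \<not> (a, b) < z)"
    show "(a, b) \<in> I \<and> (b < n \<longrightarrow> (a, b + 1) \<notin> I) \<and> (a < b \<longrightarrow> (a + 1, b) \<notin> I)"
    proof (intro conjI impI)
      show "(a, b) \<in> I" using h by auto
    next
      assume "b < n"
      have "(a, b) < (a, b + 1)" by (auto simp: pair_less_nat)
      then show "(a, b + 1) \<notin> I" using h by blast
    next
      assume "a < b"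
      have "(a, b) < (a + 1, b)" by (auto simp: pair_less_nat)
      then show "(a + 1, b) \<notin> I" using h by blast
    qed
  next
    assume h: "(a, b) \<in> I \<and> (b < n \<longrightarrow> (a, b + 1) \<notin> I) \<and> (a < b \<longrightarrow> (a + 1, b) \<notin> I)"
    have "\<not> (a, b) < z" if z: "z \<in> I" for z
    proof
      assume lt: "(a, b) < z"
      obtain p q where zpq: "z = (p, q)" by (cases z)
      have zP: "z \<in> ?P" using ideal_sub[OF I z] .
      show False
      proof (cases "b < q")
        case True
        then have "(a, b + 1) \<in> ?P" "(a, b + 1) \<le> z" using zP zpq lt y
          by (auto simp: mem_ss pair_less_nat)
        moreover have "b < n" using True zP zpq by (auto simp: mem_ss)
        ultimately show False using ideal_closed[OF I z] h by blast
      next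
        case False
        then have "(a + 1, b) \<in> ?P" "(a + 1, b) \<le> z" "a < b" using zP zpq lt y
          by (auto simp: mem_ss pair_less_nat)
        then show False using ideal_closed[OF I z] h by blast
      qed
    qed
    then show "(a, b) \<in> I \<and> (\<forall>z\<in>I. \<not> (a, b) < z)" using h by blast
  qed
  then show ?thesis unfolding Tminus_def by simp
qed


lemma finite_ss: "finite (shifted_staircase n)"
proof -
  have "shifted_staircase n \<subseteq> {0..n} \<times> {0..n}" by (auto simp: shifted_staircase_def)
  then show ?thesis by (rule finite_subset) simp
qed

definition cf :: "nat \<Rightarrow> nat \<Rightarrow> real" where
  "cf n d = (if d = 0 then - (real n * (real n + 1)) / 4
             else - (real n * (real n + 1) - real d * (real d + 1)) / 2)"

lemma cf_n: "n \<ge> 1 \<Longrightarrow> cf n n = 0"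
  by (simp add: cf_def)

lemma cf_rec:
  assumes "d < n"
  shows "-2 * cf n d + cf n (d + 1) + (if d = 0 then 0 else if d = 1 then 2 * cf n 0 else cf n (d - 1)) = 1"
proof -
  consider "d = 0" | "d = 1" | "d \<ge> 2" by linarith
  then show ?thesis
  proof cases
    case 3
    then have "real (d - 1) = real d - 1" by auto
    have "cf n (d - 1) = - (real n * (real n + 1) - (real d - 1) * real d) / 2"
      using 3 \<open>real (d - 1) = real d - 1\<close> by (simp add: cf_def)
    moreover have "cf n (d + 1) = - (real n * (real n + 1) - (real d + 1) * (real d + 2)) / 2"
      by (simp add: cf_def algebra_simps)
    moreover have "cf n d = - (real n * (real n + 1) - real d * (real d + 1)) / 2"
      using 3 by (simp add: cf_def)
    ultimately show ?thesis using 3 by (simp add: algebra_simps add_divide_distrib[symmetric])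
  next
    case 1
    have "cf n 0 = - (real n * (real n + 1)) / 4" "cf n 1 = - (real n * (real n + 1) - 2) / 2"
      by (simp_all add: cf_def)
    then show ?thesis using 1 by simp
  next
    case 2
    have "cf n 0 = - (real n * (real n + 1)) / 4" "cf n 1 = - (real n * (real n + 1) - 2) / 2"
      "cf n 2 = - (real n * (real n + 1) - 6) / 2"
      by (simp_all add: cf_def)
    then show ?thesis using 2 by (simp add: eval_nat_numeral)
  qed
qed

lemma insert_ideal:
  assumes J: "J \<in> order_ideals P" and x: "x \<in> P" and add: "\<forall>y\<in>P. y < x \<longrightarrow> y \<in> J"
  shows "insert x J \<in> order_ideals P"
  using J x add unfolding order_ideals_def
  by (auto simp: order.order_iff_strict)

lemma step:
  fixes i j n :: nat
  defines "P \<equiv> shifted_staircase n"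
  defines "c \<equiv> (\<lambda>y::nat\<times>nat. cf n (snd y - fst y))"
  assumes J: "J \<in> order_ideals P" and x: "(i, j) \<in> P" and xJ: "(i, j) \<notin> J"
    and add: "\<forall>y\<in>P. y < (i, j) \<longrightarrow> y \<in> J"
  shows "(\<Sum>y\<in>P. c y * toggle P y (insert (i, j) J)) = (\<Sum>y\<in>P. c y * toggle P y J) + 1"
proof -
  let ?x = "(i, j)"
  let ?J' = "insert ?x J"
  have J': "?J' \<in> order_ideals P" using insert_ideal[OF J x add] .
  have ij: "1 \<le> i" "i \<le> j" "j \<le> n" using x by (auto simp: P_def mem_ss)
  define f where "f y = c y * (toggle P y ?J' - toggle P y J)" for y
  have l1: "(i - 1, j) \<in> J" if "2 \<le> i"
  proof -
    have "(i - 1, j) \<in> P" "(i - 1, j) < (i, j)" using that ij by (auto simp: P_def mem_ss pair_less_nat)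
    then show ?thesis using add by blast
  qed
  have l2: "(i, j - 1) \<in> J" if "i < j"
  proof -
    have "(i, j - 1) \<in> P" "(i, j - 1) < (i, j)" using that ij by (auto simp: P_def mem_ss pair_less_nat)
    then show ?thesis using add by blast
  qed
  have u1: "(i, j + 1) \<notin> J" 
    using ideal_closed[OF J _ x, of "(i, j + 1)"] xJ by auto
  have u2: "(i + 1, j) \<notin> J" 
    using ideal_closed[OF J _ x, of "(i + 1, j)"] xJ by auto
  have other: "f y = 0" if yP: "y \<in> P" and ne: "y \<noteq> ?x" "y \<noteq> (i - 1, j)" "y \<noteq> (i, j - 1)"
    "y \<noteq> (i + 1, j)" "y \<noteq> (i, j + 1)" for y
  proof -
    obtain a b where y: "y = (a, b)" by (cases y)
    have yP': "(a, b) \<in> shifted_staircase n" using yP y P_def by simp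
    have ab: "1 \<le> a" "a \<le> b" "b \<le> n" using yP' by (auto simp: mem_ss)
    have n1: "(a - 1, b) \<noteq> ?x" using ne y ab ij by auto
    have n2: "a < b \<Longrightarrow> (a, b - 1) \<noteq> ?x" using ne y ab ij by auto
    have n3: "(a, b + 1) \<noteq> ?x" using ne y ab ij by auto
    have n4: "(a + 1, b) \<noteq> ?x" using ne y ab ij by auto
    have J'': "?J' \<in> order_ideals (shifted_staircase n)" using J' P_def by simp
    have J0: "J \<in> order_ideals (shifted_staircase n)" using J P_def by simp
    have m0: "((a, b) \<in> ?J') = ((a, b) \<in> J)" using ne(1) y by auto
    have m1: "((a - 1, b) \<in> ?J') = ((a - 1, b) \<in> J)" using n1 by auto
    have m2: "(a < b \<longrightarrow> (a, b - 1) \<in> ?J') = (a < b \<longrightarrow> (a, b - 1) \<in> J)" using n2 by auto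
    have m3: "((a, b + 1) \<in> ?J') = ((a, b + 1) \<in> J)" using n3 by auto
    have m4: "((a + 1, b) \<in> ?J') = ((a + 1, b) \<in> J)" using n4 by auto
    have "toggle P y ?J' = toggle P y J"
      unfolding toggle_def y P_def tplus_char[OF J'' yP'] tplus_char[OF J0 yP']
        tminus_char[OF J'' yP'] tminus_char[OF J0 yP']
      by (simp only: m0 m1 m2 m3 m4)
    then show ?thesis by (simp add: f_def)
  qed
  have fsplit: "f y = (if y = ?x then f ?x else 0) + (if y = (i - 1, j) then f (i - 1, j) else 0)
      + (if y = (i, j - 1) then f (i, j - 1) else 0) + (if y = (i + 1, j) then f (i + 1, j) else 0)
      + (if y = (i, j + 1) then f (i, j + 1) else 0)" if "y \<in> P" for y
    using other[OF that] ij by auto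
  have "(\<Sum>y\<in>P. f y) = (\<Sum>y\<in>P. (if y = ?x then f ?x else 0) + (if y = (i - 1, j) then f (i - 1, j) else 0)
      + (if y = (i, j - 1) then f (i, j - 1) else 0) + (if y = (i + 1, j) then f (i + 1, j) else 0)
      + (if y = (i, j + 1) then f (i, j + 1) else 0))"
    using fsplit by (rule sum.cong[OF refl])
  also have "\<dots> = f ?x + (if (i - 1, j) \<in> P then f (i - 1, j) else 0)
      + (if (i, j - 1) \<in> P then f (i, j - 1) else 0) + (if (i + 1, j) \<in> P then f (i + 1, j) else 0)
      + (if (i, j + 1) \<in> P then f (i, j + 1) else 0)"
    using x finite_ss[of n] unfolding P_def by (simp only: sum.distrib) (simp add: sum.delta)
  finally have sumf: "(\<Sum>y\<in>P. f y) = \<dots>" .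
  have xP': "(i, j) \<in> shifted_staircase n" using x P_def by simp
  have J'': "?J' \<in> order_ideals (shifted_staircase n)" using J' P_def by simp
  have J0: "J \<in> order_ideals (shifted_staircase n)" using J P_def by simp
  have f0: "f (i, j) = -2 * cf n (j - i)"
    unfolding f_def toggle_def P_def tplus_char[OF J'' xP'] tplus_char[OF J0 xP']
        tminus_char[OF J'' xP'] tminus_char[OF J0 xP']
    using xJ l1 l2 u1 u2 by (simp add: c_def)
  have f1: "f (i - 1, j) = cf n (j - i + 1) * (if j < n \<longrightarrow> (i - 1, j + 1) \<notin> J then 1 else 0)"
    if h: "2 \<le> i"
  proof -
    have yP: "(i - 1, j) \<in> shifted_staircase n" using h ij by (auto simp: mem_ss)
    have e: "i - 1 + 1 = i" "j - (i - 1) = j - i + 1" "i - 1 < j" using h ij by auto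
    show ?thesis
      unfolding f_def toggle_def P_def tplus_char[OF J'' yP] tplus_char[OF J0 yP]
        tminus_char[OF J'' yP] tminus_char[OF J0 yP]
      using xJ l1[OF h] h ij e by (simp add: c_def)
  qed
  have f4: "f (i, j + 1) = cf n (j - i + 1) * (if 2 \<le> i \<longrightarrow> (i - 1, j + 1) \<in> J then 1 else 0)"
    if h: "j < n"
  proof -
    have yP: "(i, j + 1) \<in> shifted_staircase n" using h ij by (auto simp: mem_ss)
    have e: "j + 1 - i = j - i + 1" using h ij by auto
    have n1: "(i, j + 1 + 1) \<notin> J" 
      using ideal_closed[OF J _ x, of "(i, j + 1 + 1)"] xJ by auto
    have n2: "(i + 1, j + 1) \<notin> J" 
      using ideal_closed[OF J _ x, of "(i + 1, j + 1)"] xJ by auto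
    show ?thesis
      unfolding f_def toggle_def P_def tplus_char[OF J'' yP] tplus_char[OF J0 yP]
        tminus_char[OF J'' yP] tminus_char[OF J0 yP]
      using xJ u1 n1 n2 h ij e by (simp add: c_def)
  qed
  have f2: "f (i, j - 1) = cf n (j - i - 1) * (if i + 1 < j \<longrightarrow> (i + 1, j - 1) \<notin> J then 1 else 0)"
    if h: "i < j"
  proof -
    have yP: "(i, j - 1) \<in> shifted_staircase n" using h ij by (auto simp: mem_ss)
    have e: "j - 1 + 1 = j" "j - 1 - i = j - i - 1" using h ij by auto
    show ?thesis
      unfolding f_def toggle_def P_def tplus_char[OF J'' yP] tplus_char[OF J0 yP]
        tminus_char[OF J'' yP] tminus_char[OF J0 yP]
      using xJ l2[OF h] h ij e by (auto simp: c_def)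
  qed
  have f3: "f (i + 1, j) = cf n (j - i - 1) * (if i + 1 < j \<longrightarrow> (i + 1, j - 1) \<in> J then 1 else 0)"
    if h: "i < j"
  proof -
    have yP: "(i + 1, j) \<in> shifted_staircase n" using h ij by (auto simp: mem_ss)
    have e: "i + 1 - 1 = i" "j - (i + 1) = j - i - 1" using h ij by auto
    have n1: "(i + 1, j + 1) \<notin> J" 
      using ideal_closed[OF J _ x, of "(i + 1, j + 1)"] xJ by auto
    have n2: "(i + 1 + 1, j) \<notin> J" 
      using ideal_closed[OF J _ x, of "(i + 1 + 1, j)"] xJ by auto
    show ?thesis
      unfolding f_def toggle_def P_def tplus_char[OF J'' yP] tplus_char[OF J0 yP]
        tminus_char[OF J'' yP] tminus_char[OF J0 yP]
      using xJ u2 n1 n2 h ij e by (auto simp: c_def)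
  qed
  have p1: "(i - 1, j) \<in> P \<longleftrightarrow> 2 \<le> i" using ij by (auto simp: P_def mem_ss)
  have p4: "(i, j + 1) \<in> P \<longleftrightarrow> j < n" using ij by (auto simp: P_def mem_ss)
  have p2: "(i, j - 1) \<in> P \<longleftrightarrow> i < j" using ij by (auto simp: P_def mem_ss)
  have p3: "(i + 1, j) \<in> P \<longleftrightarrow> i < j" using ij by (auto simp: P_def mem_ss)
  have S1: "(if (i - 1, j) \<in> P then f (i - 1, j) else 0) + (if (i, j + 1) \<in> P then f (i, j + 1) else 0)
      = cf n (j - i + 1)"
  proof (cases "2 \<le> i \<or> j < n")
    case True
    then show ?thesis using f1 f4 p1 p4 by auto
  next
    case False
    then have "j - i + 1 = n" using ij by auto
    then show ?thesis using False p1 p4 cf_n[of n] ij by auto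
  qed
  have S2: "(if (i, j - 1) \<in> P then f (i, j - 1) else 0) + (if (i + 1, j) \<in> P then f (i + 1, j) else 0)
      = (if j - i = 0 then 0 else if j - i = 1 then 2 * cf n 0 else cf n (j - i - 1))"
    using f2 f3 p2 p3 ij by auto
  have "(\<Sum>y\<in>P. f y) = 1"
  proof -
    have "j - i < n" using ij by auto
    from cf_rec[OF this] show ?thesis using sumf f0 S1 S2 by linarith
  qed
  moreover have "(\<Sum>y\<in>P. f y) = (\<Sum>y\<in>P. c y * toggle P y ?J') - (\<Sum>y\<in>P. c y * toggle P y J)"
    unfolding f_def by (simp add: right_diff_distrib sum_subtractf)
  ultimately show ?thesis by simp
qed


lemma base:
  fixes n :: nat
  assumes n: "n \<ge> 1"
  shows "(\<Sum>y\<in>shifted_staircase n. cf n (snd y - fst y) * toggle (shifted_staircase n) y {})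
    = - (real n * (real n + 1)) / 4"
proof -
  let ?P = "shifted_staircase n"
  have E: "{} \<in> order_ideals ?P" by (simp add: order_ideals_def)
  have t: "cf n (snd y - fst y) * toggle ?P y {} = (if y = (1, 1) then cf n 0 else 0)"
    if yP: "y \<in> ?P" for y
  proof -
    obtain a b where y: "y = (a, b)" by (cases y)
    have yP': "(a, b) \<in> ?P" using yP y by simp
    have ab: "1 \<le> a" "a \<le> b" using yP' by (auto simp: mem_ss)
    show ?thesis
      unfolding y toggle_def tplus_char[OF E yP'] tminus_char[OF E yP']
      using ab by auto
  qed
  have "(\<Sum>y\<in>?P. cf n (snd y - fst y) * toggle ?P y {}) = (\<Sum>y\<in>?P. if y = (1, 1) then cf n 0 else 0)"
    using t by (rule sum.cong[OF refl])
  also have "\<dots> = cf n 0"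
    using finite_ss[of n] n by (simp add: sum.delta' mem_ss)
  finally show ?thesis by (simp add: cf_def)
qed

lemma main:
  fixes n :: nat
  assumes n: "n \<ge> 1"
  shows "I \<in> order_ideals (shifted_staircase n) \<Longrightarrow>
    (\<Sum>y\<in>shifted_staircase n. cf n (snd y - fst y) * toggle (shifted_staircase n) y I)
    = real (card I) - real n * (real n + 1) / 4"
proof (induction "card I" arbitrary: I)
  case 0
  have "finite I" using "0.prems" finite_ss[of n] by (auto simp: order_ideals_def intro: finite_subset)
  then have "I = {}" using "0.hyps" by simp
  then show ?case using base[OF n] by simp
next
  case (Suc k)
  let ?P = "shifted_staircase n"
  have fin: "finite I" using Suc.prems finite_ss[of n] by (auto simp: order_ideals_def intro: finite_subset)
  then have ne: "I \<noteq> {}" using Suc.hyps(2) by auto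
  obtain m where mI: "m \<in> I" and mmax: "\<forall>b\<in>I. m \<le> b \<longrightarrow> m = b"
    using finite_has_maximal[OF fin ne] by blast
  define J where "J = I - {m}"
  have mP: "m \<in> ?P" using ideal_sub[OF Suc.prems mI] .
  have J: "J \<in> order_ideals ?P"
    using Suc.prems mmax unfolding order_ideals_def J_def
    by (auto dest: order.trans)
  have mJ: "m \<notin> J" by (simp add: J_def)
  have add: "\<forall>y\<in>?P. y < m \<longrightarrow> y \<in> J"
    using ideal_closed[OF Suc.prems mI] unfolding J_def by auto
  have IJ: "I = insert m J" using mI J_def by auto
  have cJ: "card J = k" using Suc.hyps(2) fin mI J_def by simp
  have IH: "(\<Sum>y\<in>?P. cf n (snd y - fst y) * toggle ?P y J) = real k - real n * (real n + 1) / 4"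
    using Suc.hyps(1)[OF cJ[symmetric] J] cJ by simp
  obtain i j where mij: "m = (i, j)" by (cases m)
  have "(\<Sum>y\<in>?P. cf n (snd y - fst y) * toggle ?P y I) = (\<Sum>y\<in>?P. cf n (snd y - fst y) * toggle ?P y J) + 1"
    using step[of J n i j] J mP mJ add unfolding IJ mij by simp
  then show ?case using IH Suc.hyps(2) by simp
qed

theorem corollary3p18:
  fixes n :: nat
  assumes "n \<ge> 1"
  shows "toggle_equiv (shifted_staircase n)
           (\<lambda>I. \<Sum>p\<in>shifted_staircase n. ind p I)
           (\<lambda>I. real n * (real n + 1) / 4)"
  unfolding toggle_equiv_def
proof (intro exI ballI)
  fix I assume I: "I \<in> order_ideals (shifted_staircase n)"
  have sub: "I \<subseteq> shifted_staircase n" using I by (simp add: order_ideals_def)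
  have "(\<Sum>p\<in>shifted_staircase n. ind p I) = (\<Sum>p\<in>shifted_staircase n \<inter> I. 1)"
    using finite_ss[of n] by (simp add: ind_def sum.inter_restrict[symmetric])
  also have "\<dots> = real (card I)" using sub by (simp add: Int_absorb1)
  finally have "(\<Sum>p\<in>shifted_staircase n. ind p I) = real (card I)" .
  then show "(\<Sum>p\<in>shifted_staircase n. ind p I) - real n * (real n + 1) / 4 =
    (\<Sum>x\<in>shifted_staircase n. cf n (snd x - fst x) * toggle (shifted_staircase n) x I)"
    using main[OF assms I] by simp
qed

end
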